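(* Let $t\ge 3$ and $\Delta\ge 4$ be integers, and let $P_t$ be a path with vertices $p_1,\dots,p_t$. Form an intermediate tree by appending onto every vertex $p_j$ of the path $\Delta-2$ copies of the $\Delta$-star (each identified by one of its leaves with $p_j$). Then, for each $j$, subdivide a single edge between $p_j$ and an adjacent support vertex (center of one of the stars appended at $p_j$). Let $T_{t,\Delta}$ be the resulting tree and $n$ its order. Then \[\gamma^{\rm ID}(T_{t,\Delta}) = \left(\frac{\Delta-1+\frac{1}{\Delta-2}}{\Delta+\frac{2}{\Delta-2}}\right)n > \left(\frac{\Delta-1}{\Delta}\right)n-\frac{n}{\Delta^2}.\]
   Context: An identifying code of a graph $G$ is a set $C\subseteq V(G)$ such that every vertex $v$ has $N[v]\cap C\neq\emptyset$ and for all distinct $u,v$, $N[u]\cap C \ne N[v]\cap C$, where $N[v]$ is the closed neighborhood; $\gamma^{\rm ID}(G)$ is its minimum size. A $\Delta$-star is $K_{1,\Delta}$. *)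

theory Defs
  imports Main "HOL.Real"
begin

definition closed_nbhd :: "'a set \<Rightarrow> ('a \<Rightarrow> 'a \<Rightarrow> bool) \<Rightarrow> 'a \<Rightarrow> 'a set" where
  "closed_nbhd V E v = {u \<in> V. u = v \<or> E v u}"

definition is_identifying_code :: "'a set \<Rightarrow> ('a \<Rightarrow> 'a \<Rightarrow> bool) \<Rightarrow> 'a set \<Rightarrow> bool" where
  "is_identifying_code V E C \<longleftrightarrow>
     C \<subseteq> V \<and>
     (\<forall>v\<in>V. closed_nbhd V E v \<inter> C \<noteq> {}) \<and>
     (\<forall>u\<in>V. \<forall>v\<in>V. u \<noteq> v \<longrightarrow> closed_nbhd V E u \<inter> C \<noteq> closed_nbhd V E v \<inter> C)"

definition id_code_number :: "'a set \<Rightarrow> ('a \<Rightarrow> 'a \<Rightarrow> bool) \<Rightarrow> nat" where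
  "id_code_number V E = (LEAST k. \<exists>C. is_identifying_code V E C \<and> card C = k)"

text \<open>Vertices of the tree T_{t,Delta}:
  P j      -- path vertex p_{j+1} (j < t);
  C j k    -- centre of the k-th star appended at P j (k < Delta-2);
  L j k l  -- the Delta-1 leaves of that star other than P j (l < Delta-1);
  S j      -- the subdivision vertex on the edge P j -- C j 0.\<close>

datatype tvert = P nat | C nat nat | L nat nat nat | S nat

definition tverts :: "nat \<Rightarrow> nat \<Rightarrow> tvert set" where
  "tverts t d =
     {P j | j. j < t} \<union> {S j | j. j < t} \<union>
     {C j k | j k. j < t \<and> k < d - 2} \<union>
     {L j k l | j k l. j < t \<and> k < d - 2 \<and> l < d - 1}"

definition tarc :: "nat \<Rightarrow> nat \<Rightarrow> tvert \<Rightarrow> tvert \<Rightarrow> bool" where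
  "tarc t d x y \<longleftrightarrow> x \<in> tverts t d \<and> y \<in> tverts t d \<and>
     (\<exists>j. (x = P j \<and> y = P (Suc j)) \<or>
          (\<exists>k. 1 \<le> k \<and> x = P j \<and> y = C j k) \<or>
          (x = P j \<and> y = S j) \<or>
          (x = S j \<and> y = C j 0) \<or>
          (\<exists>k l. x = C j k \<and> y = L j k l))"

definition tadj :: "nat \<Rightarrow> nat \<Rightarrow> tvert \<Rightarrow> tvert \<Rightarrow> bool" where
  "tadj t d x y \<longleftrightarrow> tarc t d x y \<or> tarc t d y x"

end

theory Submission
  imports Defs
begin


lemma memV[simp]:
 "P j \<in> tverts t d \<longleftrightarrow> j<t" "S j \<in> tverts t d \<longleftrightarrow> j<t"
 "C j k \<in> tverts t d \<longleftrightarrow> j<t \<and> k<d-2"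
 "L j k l \<in> tverts t d \<longleftrightarrow> j<t \<and> k<d-2 \<and> l<d-1"
  by (auto simp: tverts_def)

lemma adjL: "tadj t d (L j k l) y \<longleftrightarrow> j<t \<and> k<d-2 \<and> l<d-1 \<and> y = C j k"
  by (auto simp: tadj_def tarc_def)
lemma adjS: "tadj t d (S j) y \<longleftrightarrow> j<t \<and> (y = P j \<or> (y = C j 0 \<and> 0<d-2))"
  by (auto simp: tadj_def tarc_def)
lemma adjC: "tadj t d (C j k) y \<longleftrightarrow> j<t \<and> k<d-2 \<and> ((\<exists>l<d-1. y = L j k l) \<or> (k=0 \<and> y = S j) \<or> (k\<ge>1 \<and> y = P j))"
  by (auto simp: tadj_def tarc_def)
lemma adjP: "tadj t d (P j) y \<longleftrightarrow> j<t \<and> ((y = P (Suc j) \<and> Suc j < t) \<or> (\<exists>i. j = Suc i \<and> y = P i) \<or> y = S j \<or> (\<exists>k. 1\<le>k \<and> k<d-2 \<and> y = C j k))"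
  by (auto simp: tadj_def tarc_def)



lemma memN: "x \<in> closed_nbhd V E v \<longleftrightarrow> x \<in> V \<and> (x = v \<or> E v x)"
  by (auto simp: closed_nbhd_def)

definition code0 :: "nat \<Rightarrow> nat \<Rightarrow> tvert set" where
  "code0 t d = {S j|j. j<t} \<union> {C j k|j k. j<t \<and> k<d-2} \<union> {L j k l|j k l. j<t \<and> k<d-2 \<and> 1\<le>l \<and> l<d-1}"

lemma memcode[simp]:
 "P j \<notin> code0 t d" "S j \<in> code0 t d \<longleftrightarrow> j<t"
 "C j k \<in> code0 t d \<longleftrightarrow> j<t \<and> k<d-2"
 "L j k l \<in> code0 t d \<longleftrightarrow> j<t \<and> k<d-2 \<and> 1 \<le> l \<and> l<d-1"
  by (auto simp: code0_def)

lemma code0_id: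
  assumes "d \<ge> 4"
  shows "is_identifying_code (tverts t d) (tadj t d) (code0 t d)"
  unfolding is_identifying_code_def
proof (intro conjI ballI impI)
  show "code0 t d \<subseteq> tverts t d" by (auto simp: code0_def)
next
  fix v assume v: "v \<in> tverts t d"
  show "closed_nbhd (tverts t d) (tadj t d) v \<inter> code0 t d \<noteq> {}"
  proof (cases v)
    case (P j) then have "S j \<in> closed_nbhd (tverts t d) (tadj t d) v \<inter> code0 t d"
      using v by (auto simp: memN adjP)
    then show ?thesis by blast
  next
    case (S j) then have "S j \<in> closed_nbhd (tverts t d) (tadj t d) v \<inter> code0 t d"
      using v by (auto simp: memN)
    then show ?thesis by blast
  next
    case (C j k) then have "C j k \<in> closed_nbhd (tverts t d) (tadj t d) v \<inter> code0 t d"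
      using v by (auto simp: memN)
    then show ?thesis by blast
  next
    case (L j k l) then have "C j k \<in> closed_nbhd (tverts t d) (tadj t d) v \<inter> code0 t d"
      using v by (auto simp: memN adjL)
    then show ?thesis by blast
  qed
next
  fix u v assume u: "u \<in> tverts t d" and v: "v \<in> tverts t d" and uv: "u \<noteq> v"
  let ?X = "\<lambda>w. closed_nbhd (tverts t d) (tadj t d) w \<inter> code0 t d"
  have key: "\<And>a b. a \<in> tverts t d \<Longrightarrow> b \<in> tverts t d \<Longrightarrow> a \<noteq> b \<Longrightarrow> (\<exists>w. w \<in> ?X a \<and> w \<notin> ?X b) \<or> (\<exists>w. w \<in> ?X b \<and> w \<notin> ?X a)"
  proof -
    fix a b assume a: "a \<in> tverts t d" and b: "b \<in> tverts t d" and ab: "a \<noteq> b"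
    show "(\<exists>w. w \<in> ?X a \<and> w \<notin> ?X b) \<or> (\<exists>w. w \<in> ?X b \<and> w \<notin> ?X a)"
    proof (cases a)
      case (P j)
      then show ?thesis using a b ab assms
        apply (cases b)
        subgoal for j' apply (rule disjI1, rule exI[of _ "S j"]) by (auto simp: memN adjP)
        subgoal for j' k' apply (cases "j = j'")
          subgoal apply (cases k')
            subgoal apply (rule disjI2, rule exI[of _ "L j' 0 1"]) by (auto simp: memN adjP adjC)
            subgoal apply (rule disjI2, rule exI[of _ "L j' k' 1"]) by (auto simp: memN adjP adjC)
            done
          subgoal apply (rule disjI1, rule exI[of _ "S j"]) by (auto simp: memN adjP adjC)
          done
        subgoal for j' k' l' apply (rule disjI1, rule exI[of _ "S j"]) by (auto simp: memN adjP adjL)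
        subgoal for j' apply (rule disjI1, rule exI[of _ "C j 1"]) by (auto simp: memN adjP adjS)
        done
    next
      case (S j)
      then show ?thesis using a b ab assms
        apply (cases b)
        subgoal for j' apply (rule disjI1, rule exI[of _ "C j 0"]) by (auto simp: memN adjP adjS)
        subgoal for j' k' apply (rule disjI2, rule exI[of _ "L j' k' 1"]) by (auto simp: memN adjS adjC)
        subgoal for j' k' l' apply (rule disjI1, rule exI[of _ "S j"]) by (auto simp: memN adjS adjL)
        subgoal for j' apply (rule disjI1, rule exI[of _ "S j"]) by (auto simp: memN adjP adjS)
        done
    next
      case (C j k)
      then show ?thesis using a b ab assms
        apply (cases b)
        subgoal for j' apply (rule disjI1, rule exI[of _ "L j k 1"]) by (auto simp: memN adjP adjC)
        subgoal for j' k' apply (rule disjI1, rule exI[of _ "C j k"]) by (auto simp: memN adjC)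
        subgoal for j' k' l' apply (cases "j = j' \<and> k = k'")
          subgoal apply (cases "l' = 1")
            subgoal apply (rule disjI1, rule exI[of _ "L j k 2"]) by (auto simp: memN adjC adjL)
            subgoal apply (rule disjI1, rule exI[of _ "L j k 1"]) by (auto simp: memN adjC adjL)
            done
          subgoal apply (rule disjI1, rule exI[of _ "C j k"]) by (auto simp: memN adjC adjL)
          done
        subgoal for j' apply (rule disjI1, rule exI[of _ "L j k 1"]) by (auto simp: memN adjS adjC)
        done
    next
      case (L j k l)
      then show ?thesis using a b ab assms
        apply (cases b)
        subgoal for j' apply (rule disjI2, rule exI[of _ "S j'"]) by (auto simp: memN adjP adjL)
        subgoal for j' k' apply (cases "j = j' \<and> k = k'")
          subgoal apply (cases "l = 1")
            subgoal apply (rule disjI2, rule exI[of _ "L j k 2"]) by (auto simp: memN adjC adjL)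
            subgoal apply (rule disjI2, rule exI[of _ "L j k 1"]) by (auto simp: memN adjC adjL)
            done
          subgoal apply (rule disjI2, rule exI[of _ "C j' k'"]) by (auto simp: memN adjC adjL)
          done
        subgoal for j' k' l' apply (cases "j = j' \<and> k = k'")
          subgoal apply (cases "l = 0")
            subgoal apply (rule disjI2, rule exI[of _ "L j k l'"]) by (auto simp: memN adjL)
            subgoal apply (rule disjI1, rule exI[of _ "L j k l"]) by (auto simp: memN adjL)
            done
          subgoal apply (rule disjI1, rule exI[of _ "C j k"]) by (auto simp: memN adjL)
          done
        subgoal for j' apply (rule disjI2, rule exI[of _ "S j'"]) by (auto simp: memN adjS adjL)
        done
    qed
  qed
  show "?X u \<noteq> ?X v" using key[OF u v uv] by blast
qed



definition star :: "nat \<Rightarrow> nat \<Rightarrow> nat \<Rightarrow> tvert set" where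
  "star d j k = insert (C j k) (L j k ` {..<d-1})"
definition block :: "nat \<Rightarrow> nat \<Rightarrow> tvert set" where
  "block d j = {P j, S j} \<union> (\<Union>k<d-2. star d j k)"
definition cblock :: "nat \<Rightarrow> nat \<Rightarrow> tvert set" where
  "cblock d j = insert (S j) (\<Union>k<d-2. insert (C j k) (L j k ` {1..<d-1}))"

lemma tverts_UN: "tverts t d = (\<Union>j<t. block d j)"
  by (auto simp: tverts_def block_def star_def)
lemma code0_UN: "code0 t d = (\<Union>j<t. cblock d j)"
  by (auto simp: code0_def cblock_def image_iff)

lemma card_star: "d \<ge> 1 \<Longrightarrow> card (star d j k) = d"
  unfolding star_def by (subst card_insert_disjoint) (auto simp: card_image inj_on_def)

lemma fin_star[simp]: "finite (star d j k)" by (simp add: star_def)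
lemma fin_block[simp]: "finite (block d j)" by (simp add: block_def)

lemma card_block: assumes "d \<ge> 4" shows "card (block d j) = 2 + (d-2)*d"
proof -
  have "card (\<Union>k<d-2. star d j k) = (\<Sum>k<d-2. card (star d j k))"
    by (rule card_UN_disjoint) (auto simp: star_def)
  also have "\<dots> = (d-2)*d" using assms by (simp add: card_star)
  finally have h: "card (\<Union>k<d-2. star d j k) = (d-2)*d" .
  have "card (block d j) = card {P j, S j} + card (\<Union>k<d-2. star d j k)"
    unfolding block_def by (rule card_Un_disjoint) (auto simp: star_def)
  then show ?thesis using h by simp
qed

lemma card_V: assumes "d \<ge> 4" shows "card (tverts t d) = t * (2 + (d-2)*d)"
proof -
  have "card (tverts t d) = (\<Sum>j<t. card (block d j))"
    unfolding tverts_UN by (rule card_UN_disjoint) (auto simp: block_def star_def)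
  then show ?thesis using card_block[OF assms] by simp
qed

lemma card_cblock: assumes "d \<ge> 4" shows "card (cblock d j) = 1 + (d-2)*(d-1)"
proof -
  have c1: "card (insert (C j k) (L j k ` {1..<d-1})) = d - 1" for k
    using assms by (subst card_insert_disjoint) (auto simp: card_image inj_on_def)
  have "card (\<Union>k<d-2. insert (C j k) (L j k ` {1..<d-1})) = (\<Sum>k<d-2. card (insert (C j k) (L j k ` {1..<d-1})))"
    by (rule card_UN_disjoint) auto
  also have "\<dots> = (d-2)*(d-1)" using c1 by simp
  finally show ?thesis unfolding cblock_def by (subst card_insert_disjoint) auto
qed

lemma card_code0: assumes "d \<ge> 4" shows "card (code0 t d) = t * (1 + (d-2)*(d-1))"
proof -
  have "card (code0 t d) = (\<Sum>j<t. card (cblock d j))"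
    unfolding code0_UN by (rule card_UN_disjoint) (auto simp: cblock_def)
  then show ?thesis using card_cblock[OF assms] by simp
qed



lemma NL: "j<t \<Longrightarrow> k<d-2 \<Longrightarrow> l<d-1 \<Longrightarrow> closed_nbhd (tverts t d) (tadj t d) (L j k l) = {L j k l, C j k}"
  by (auto simp: memN adjL)
lemma NS: "j<t \<Longrightarrow> d \<ge> 4 \<Longrightarrow> closed_nbhd (tverts t d) (tadj t d) (S j) = {S j, P j, C j 0}"
  by (auto simp: memN adjS)

lemma card_Diff_ge: "finite A \<Longrightarrow> card (A - {m}) \<ge> card A - 1"
  by (cases "m \<in> A") (simp_all add: card_Diff_singleton)

lemma star_lb:
  assumes X: "is_identifying_code (tverts t d) (tadj t d) X" and j: "j<t" and k: "k<d-2"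
  shows "card (X \<inter> star d j k) \<ge> d - 1"
proof -
  let ?N = "closed_nbhd (tverts t d) (tadj t d)"
  have dom: "\<And>v. v \<in> tverts t d \<Longrightarrow> ?N v \<inter> X \<noteq> {}"
   and sep: "\<And>u v. u \<in> tverts t d \<Longrightarrow> v \<in> tverts t d \<Longrightarrow> u \<noteq> v \<Longrightarrow> ?N u \<inter> X \<noteq> ?N v \<inter> X"
    using X unfolding is_identifying_code_def by auto
  have fin: "finite (X \<inter> star d j k)" by simp
  show ?thesis
  proof (cases "C j k \<in> X")
    case False
    have "L j k ` {..<d-1} \<subseteq> X \<inter> star d j k"
    proof
      fix x assume "x \<in> L j k ` {..<d-1}"
      then obtain l where l: "l < d-1" "x = L j k l" by auto
      have "?N (L j k l) \<inter> X \<noteq> {}" using dom j k l by simp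
      then show "x \<in> X \<inter> star d j k" using NL[OF j k l(1)] False l by (auto simp: star_def)
    qed
    then have "card (L j k ` {..<d-1}) \<le> card (X \<inter> star d j k)" using fin by (rule card_mono[rotated])
    then show ?thesis by (simp add: card_image inj_on_def)
  next
    case True
    have "\<exists>m. L j k ` {..<d-1} - {m} \<subseteq> X"
    proof (rule ccontr)
      assume nt: "\<not> ?thesis"
      then obtain a where a: "a \<in> L j k ` {..<d-1}" "a \<notin> X" by blast
      then obtain b where b: "b \<in> L j k ` {..<d-1}" "b \<noteq> a" "b \<notin> X" using nt by blast
      obtain la where la: "la < d-1" "a = L j k la" using a by auto
      obtain lb where lb: "lb < d-1" "b = L j k lb" using b by auto
      have "?N a \<inter> X = {C j k} \<inter> X" unfolding la(2) NL[OF j k la(1)] using a(2) la(2) by blast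
      moreover have "?N b \<inter> X = {C j k} \<inter> X" unfolding lb(2) NL[OF j k lb(1)] using b(3) lb(2) by blast
      moreover have "?N a \<inter> X \<noteq> ?N b \<inter> X" by (rule sep) (use j k la lb b(2) in simp_all)
      ultimately show False by simp
    qed
    then obtain m where m: "L j k ` {..<d-1} - {m} \<subseteq> X" by blast
    have sub: "insert (C j k) (L j k ` {..<d-1} - {m}) \<subseteq> X \<inter> star d j k"
      using m True by (auto simp: star_def)
    have "card (insert (C j k) (L j k ` {..<d-1} - {m})) = 1 + card (L j k ` {..<d-1} - {m})"
      by (subst card_insert_disjoint) auto
    moreover have "card (L j k ` {..<d-1} - {m}) \<ge> card (L j k ` {..<d-1}) - 1"
      by (rule card_Diff_ge) simp
    moreover have "card (L j k ` {..<d-1}) = d - 1" by (simp add: card_image inj_on_def)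
    moreover have "card (insert (C j k) (L j k ` {..<d-1} - {m})) \<le> card (X \<inter> star d j k)"
      using sub fin by (rule card_mono[rotated])
    ultimately show ?thesis by linarith
  qed
qed

lemma block_lb:
  assumes X: "is_identifying_code (tverts t d) (tadj t d) X" and j: "j<t" and d: "d \<ge> 4"
  shows "card (X \<inter> block d j) \<ge> 1 + (d-2)*(d-1)"
proof -
  let ?N = "closed_nbhd (tverts t d) (tadj t d)"
  have dom: "\<And>v. v \<in> tverts t d \<Longrightarrow> ?N v \<inter> X \<noteq> {}"
   and sep: "\<And>u v. u \<in> tverts t d \<Longrightarrow> v \<in> tverts t d \<Longrightarrow> u \<noteq> v \<Longrightarrow> ?N u \<inter> X \<noteq> ?N v \<inter> X"
    using X unfolding is_identifying_code_def by auto
  have eq: "X \<inter> block d j = (X \<inter> {P j, S j}) \<union> (\<Union>k<d-2. X \<inter> star d j k)"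
    by (auto simp: block_def)
  have cu: "card (\<Union>k<d-2. X \<inter> star d j k) = (\<Sum>k<d-2. card (X \<inter> star d j k))"
    by (rule card_UN_disjoint) (auto simp: star_def)
  have c: "card (X \<inter> block d j) = card (X \<inter> {P j, S j}) + (\<Sum>k<d-2. card (X \<inter> star d j k))"
    unfolding eq cu[symmetric] by (rule card_Un_disjoint) (auto simp: star_def)
  have each: "\<And>k. k \<in> {..<d-2} \<Longrightarrow> d - 1 \<le> card (X \<inter> star d j k)"
    using star_lb[OF X j] by auto
  have "(\<Sum>k<d-2. d-1) \<le> (\<Sum>k<d-2. card (X \<inter> star d j k))"
    by (rule sum_mono) (rule each)
  then have sumlb: "(d-2)*(d-1) \<le> (\<Sum>k<d-2. card (X \<inter> star d j k))" by simp
  show ?thesis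
  proof (cases "X \<inter> {P j, S j} = {}")
    case False
    then have "card (X \<inter> {P j, S j}) \<ge> 1" by (simp add: Suc_leI card_gt_0_iff)
    then show ?thesis using c sumlb by linarith
  next
    case True
    have d2: "0 < d - 2" using d by simp
    have "C j 0 \<in> X" using dom[of "S j"] NS[OF j d] True j by auto
    have leaves: "L j 0 ` {..<d-1} \<subseteq> X"
    proof
      fix x assume "x \<in> L j 0 ` {..<d-1}"
      then obtain l where l: "l < d-1" "x = L j 0 l" by auto
      show "x \<in> X"
      proof (rule ccontr)
        assume "x \<notin> X"
        then have "?N x \<inter> X = ?N (S j) \<inter> X"
          unfolding l(2) NL[OF j d2 l(1)] NS[OF j d] using True l(2) \<open>C j 0 \<in> X\<close> by blast
        moreover have "?N x \<inter> X \<noteq> ?N (S j) \<inter> X" by (rule sep) (use j d2 l in simp_all)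
        ultimately show False by simp
      qed
    qed
    have "X \<inter> star d j 0 = star d j 0" using leaves \<open>C j 0 \<in> X\<close> by (auto simp: star_def)
    then have s0: "card (X \<inter> star d j 0) = d" using card_star d by simp
    have "(\<Sum>k<d-2. card (X \<inter> star d j k)) = card (X \<inter> star d j 0) + (\<Sum>k\<in>{..<d-2}-{0}. card (X \<inter> star d j k))"
      using d2 by (subst sum.remove[of _ 0]) auto
    moreover have "(d-3)*(d-1) \<le> (\<Sum>k\<in>{..<d-2}-{0}. card (X \<inter> star d j k))"
    proof -
      have "(\<Sum>k\<in>{..<d-2}-{0}. d - 1) \<le> (\<Sum>k\<in>{..<d-2}-{0}. card (X \<inter> star d j k))"
        by (rule sum_mono) (use each in auto)
      moreover have "card ({..<d-2}-{0}) = d - 3" using d2 by simp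
      ultimately show ?thesis by simp
    qed
    ultimately have "d + (d-3)*(d-1) \<le> card (X \<inter> block d j)" using c s0 by linarith
    moreover have "d + (d-3)*(d-1) = 1 + (d-2)*(d-1)"
    proof -
      obtain e where "d = e + 4" using d by (metis add.commute le_add_diff_inverse)
      then show ?thesis by (simp add: algebra_simps)
    qed
    ultimately show ?thesis by simp
  qed
qed

lemma lb:
  assumes X: "is_identifying_code (tverts t d) (tadj t d) X" and d: "d \<ge> 4"
  shows "card X \<ge> t * (1 + (d-2)*(d-1))"
proof -
  have XV: "X \<subseteq> tverts t d" using X by (simp add: is_identifying_code_def)
  have "X = (\<Union>j<t. X \<inter> block d j)" using XV by (auto simp: tverts_UN)
  moreover have "card (\<Union>j<t. X \<inter> block d j) = (\<Sum>j<t. card (X \<inter> block d j))"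
    by (rule card_UN_disjoint) (auto simp: block_def star_def)
  moreover have "(\<Sum>j<t. 1 + (d-2)*(d-1)) \<le> (\<Sum>j<t. card (X \<inter> block d j))"
    by (rule sum_mono) (use block_lb[OF X _ d] in auto)
  ultimately show ?thesis by simp
qed



lemma idnum: assumes d: "d \<ge> 4" shows "id_code_number (tverts t d) (tadj t d) = t * (1 + (d-2)*(d-1))"
  unfolding id_code_number_def
proof (rule Least_equality)
  show "\<exists>X. is_identifying_code (tverts t d) (tadj t d) X \<and> card X = t * (1 + (d-2)*(d-1))"
    using code0_id[OF d] card_code0[OF d] by blast
next
  fix y assume "\<exists>X. is_identifying_code (tverts t d) (tadj t d) X \<and> card X = y"
  then show "t * (1 + (d-2)*(d-1)) \<le> y" using lb[OF _ d] by blast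
qed

theorem mainTheorem18:
  fixes t \<Delta> :: nat
  assumes "t \<ge> 3" and "\<Delta> \<ge> 4"
  shows "real (id_code_number (tverts t \<Delta>) (tadj t \<Delta>)) =
           ((real \<Delta> - 1 + 1 / (real \<Delta> - 2)) / (real \<Delta> + 2 / (real \<Delta> - 2)))
             * real (card (tverts t \<Delta>))
       \<and> ((real \<Delta> - 1 + 1 / (real \<Delta> - 2)) / (real \<Delta> + 2 / (real \<Delta> - 2)))
             * real (card (tverts t \<Delta>))
         > ((real \<Delta> - 1) / real \<Delta>) * real (card (tverts t \<Delta>))
           - real (card (tverts t \<Delta>)) / (real \<Delta>)^2"
proof -
  obtain e where e: "\<Delta> = e + 4" using assms(2) by (metis add.commute le_add_diff_inverse)
  define x where "x = real e"
  have x0: "x \<ge> 0" by (simp add: x_def)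
  have tp: "real t > 0" using assms(1) by simp
  have I: "real (id_code_number (tverts t \<Delta>) (tadj t \<Delta>)) = real t * ((x+2)*(x+3)+1)"
  proof -
    have "t * (1 + (\<Delta>-2)*(\<Delta>-1)) = t*((e+2)*(e+3)+1)" by (simp add: e)
    then show ?thesis unfolding idnum[OF assms(2)] x_def by (simp add: algebra_simps)
  qed
  have N: "real (card (tverts t \<Delta>)) = real t * ((x+2)*(x+4)+2)"
  proof -
    have "t * (2 + (\<Delta>-2)*\<Delta>) = t*((e+2)*(e+4)+2)" by (simp add: e)
    then show ?thesis unfolding card_V[OF assms(2)] x_def by (simp add: algebra_simps)
  qed
  have D: "real \<Delta> = x + 4" unfolding e x_def by simp
  have f: "(real \<Delta> - 1 + 1 / (real \<Delta> - 2)) / (real \<Delta> + 2 / (real \<Delta> - 2)) = ((x+2)*(x+3)+1) / ((x+2)*(x+4)+2)"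
  proof -
    have k: "x + 2 \<noteq> 0" using x0 by simp
    have a: "(x + 4 - 1 + 1 / (x + 4 - 2)) * (x+2) = (x+2)*(x+3)+1" using k by (simp add: field_simps)
    have b: "(x + 4 + 2 / (x + 4 - 2)) * (x+2) = (x+2)*(x+4)+2" using k by (simp add: field_simps)
    have "(x + 4 - 1 + 1 / (x + 4 - 2)) / (x + 4 + 2 / (x + 4 - 2)) =
          ((x + 4 - 1 + 1 / (x + 4 - 2)) * (x+2)) / ((x + 4 + 2 / (x + 4 - 2)) * (x+2))"
      using k by simp
    then show ?thesis unfolding D a b .
  qed
  have p: "(x+2)*(x+4)+2 > 0" using x0 by (simp add: add_pos_pos)
  show ?thesis
  proof
    show "real (id_code_number (tverts t \<Delta>) (tadj t \<Delta>)) =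
           ((real \<Delta> - 1 + 1 / (real \<Delta> - 2)) / (real \<Delta> + 2 / (real \<Delta> - 2)))
             * real (card (tverts t \<Delta>))"
      unfolding I N f using p by simp
  next
    define A where "A = (x+2)*(x+3)+1"
    define Q where "Q = (x+2)*(x+4)+2"
    have q: "Q > 0" using p by (simp add: Q_def)
    have id: "A*(x+4)^2 = Q*((x+3)*(x+4)-1) + 2" unfolding A_def Q_def by (simp add: algebra_simps power2_eq_square)
    have L: "A / Q * (real t * Q) = real t * A" using q by simp
    have R: "(x + 4 - 1) / (x + 4) * (real t * Q) - real t * Q / (x + 4)\<^sup>2 = real t * Q * ((x+3)*(x+4)-1) / (x+4)^2"
    proof -
      have h: "x + 4 \<noteq> 0" using x0 by simp
      have "(x + 4 - 1) / (x + 4) = (x+3)*(x+4) / (x+4)^2" using h by (simp add: power2_eq_square)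
      then have "(x + 4 - 1) / (x + 4) * (real t * Q) - real t * Q / (x + 4)\<^sup>2 =
         ((x+3)*(x+4)) * (real t * Q) / (x+4)^2 - real t * Q / (x + 4)\<^sup>2" by simp
      also have "\<dots> = real t * Q * ((x+3)*(x+4)-1) / (x+4)^2" by (simp add: diff_divide_distrib[symmetric] algebra_simps)
      finally show ?thesis .
    qed
    have "real t * Q * ((x+3)*(x+4)-1) < real t * A * (x+4)^2"
    proof -
      have "real t * A * (x+4)^2 = real t * (A*(x+4)^2)" by simp
      also have "\<dots> = real t * Q * ((x+3)*(x+4)-1) + 2 * real t" unfolding id by (simp add: algebra_simps)
      finally show ?thesis using tp by linarith
    qed
    then have "real t * Q * ((x+3)*(x+4)-1) / (x+4)^2 < real t * A"
      using x0 by (simp add: divide_less_eq)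
    then show "((real \<Delta> - 1 + 1 / (real \<Delta> - 2)) / (real \<Delta> + 2 / (real \<Delta> - 2)))
             * real (card (tverts t \<Delta>))
         > ((real \<Delta> - 1) / real \<Delta>) * real (card (tverts t \<Delta>))
           - real (card (tverts t \<Delta>)) / (real \<Delta>)^2"
      unfolding f N unfolding D A_def[symmetric] Q_def[symmetric] L R .
  qed
qed

end
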